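(* Assume the setting of the context, with $\Delta x\sim h$. Then for all $\Delta=(h,\Delta x)$ sufficiently small, the solution $V^\Delta=(V^\Delta_{i,j})$ of the scheme, i.e. the bounded solution of $\mathcal{F}^\Delta_j(x_i,(V^\Delta_{i,j},V^\Delta_{i,\bar\jmath}),V^\Delta_{\cdot,j})=0$ for all $i\in\mathbb{N}$, $j=1,2$, is nondecreasing in $i$ for each $j$.
   Context: Constants: $\rho>0$, $r<\rho$, $0<y_1<y_2$, $\gamma>1$, $\underline{x}\le0$ with $\rho\underline{x}+y_j>0$, $\lambda_1,\lambda_2\ge0$; $\bar\jmath=3-j$; $u(c)=\frac{c^{1-\gamma}}{1-\gamma}$ for $c>0$, $u(0)=-\infty$. Discretization $\Delta=(h,\Delta x)$, $h,\Delta x>0$, $\rho h<1$, $\lambda_jh<1$; "$\Delta x\sim h$" means $h/\Delta x$ stays between two fixed positive constants as $\Delta\to0$. Grid $x_i=\underline{x}+i\Delta x$, $i\in\mathbb{N}=\{0,1,\dots\}$. $\beta_k(x)=\max\{0,1-|x-x_k|/\Delta x\}$ for $x\ge\underline{x}$. $\mathcal{C}^\Delta_j(x_i)=\{c\ge0:x_i+h(rx_i+y_j-c)\ge\underline{x}\}$, $s_{i,j}(c)=rx_i+y_j-c$. Scheme: $$\mathcal{F}^\Delta_j(x_i,(\mathsf{q}_j,\mathsf{q}_{\bar\jmath}),\mathsf{U})=\rho\mathsf{q}_j-(1-\rho h)\lambda_j(\mathsf{q}_{\bar\jmath}-\mathsf{q}_j)-\sup_{c\in\mathcal{C}^\Delta_j(x_i)}\Big\{u(c)+\frac{(1-\rho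 h)(1-\lambda_jh)}{h}\Big(\sum_k\beta_k(x_i+hs_{i,j}(c))\mathsf{U}_k-\mathsf{q}_j\Big)\Big\}.$$ This scheme has a unique bounded solution. *)

theory Defs
  imports "HOL-Analysis.Analysis" "HOL-Library.Extended_Real"
begin

definition util :: "real \<Rightarrow> real \<Rightarrow> ereal" where
  "util \<gamma> c = (if c > 0 then ereal (c powr (1 - \<gamma>) / (1 - \<gamma>)) else -\<infinity>)"

definition grid :: "real \<Rightarrow> real \<Rightarrow> nat \<Rightarrow> real" where
  "grid xl dx i = xl + real i * dx"

definition hat :: "real \<Rightarrow> real \<Rightarrow> nat \<Rightarrow> real \<Rightarrow> real" where
  "hat xl dx k z = max 0 (1 - \<bar>z - grid xl dx k\<bar> / dx)"

text \<open>Linear interpolation sum_k beta_k(z) U_k (only finitely many nonzero terms).\<close>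
definition interp :: "real \<Rightarrow> real \<Rightarrow> (nat \<Rightarrow> real) \<Rightarrow> real \<Rightarrow> real" where
  "interp xl dx U z = (\<Sum>k. hat xl dx k z * U k)"

definition consSet :: "real \<Rightarrow> real \<Rightarrow> real \<Rightarrow> real \<Rightarrow> real \<Rightarrow> nat \<Rightarrow> real set" where
  "consSet r xl h dx yj i =
     {c. c \<ge> 0 \<and> grid xl dx i + h * (r * grid xl dx i + yj - c) \<ge> xl}"

definition schemeF ::
  "real \<Rightarrow> real \<Rightarrow> real \<Rightarrow> real \<Rightarrow> real \<Rightarrow> real \<Rightarrow> real \<Rightarrow> real
   \<Rightarrow> nat \<Rightarrow> real \<Rightarrow> real \<Rightarrow> (nat \<Rightarrow> real) \<Rightarrow> ereal" where
  "schemeF \<rho> r \<gamma> xl lj yj h dx i qj qjb U =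
     ereal (\<rho> * qj - (1 - \<rho> * h) * lj * (qjb - qj))
     - (SUP c \<in> consSet r xl h dx yj i.
          util \<gamma> c + ereal ((1 - \<rho> * h) * (1 - lj * h) / h *
             (interp xl dx U (grid xl dx i + h * (r * grid xl dx i + yj - c)) - qj)))"

end

theory Submission imports Defs begin

lemma hat_alt: assumes "dx > 0"
  shows "hat xl dx m z = max 0 (1 - \<bar>(z - xl)/dx - real m\<bar>)"
proof -
  have "\<bar>z - grid xl dx m\<bar> / dx = \<bar>(z - grid xl dx m)/dx\<bar>" using assms by simp
  also have "(z - grid xl dx m)/dx = (z - xl)/dx - real m" using assms
    by (simp add: grid_def field_simps)
  finally show ?thesis by (simp add: hat_def)
qed

lemma interp_eq:
  assumes dx: "dx > 0" and z: "z \<ge> xl"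
  defines "k \<equiv> nat \<lfloor>(z - xl)/dx\<rfloor>"
  defines "t \<equiv> (z - xl)/dx - real k"
  shows "interp xl dx U z = (1 - t) * U k + t * U (Suc k)" "0 \<le> t" "t < 1"
proof -
  define w where "w = (z - xl)/dx"
  have w0: "w \<ge> 0" using dx z by (simp add: w_def)
  have kw: "real k \<le> w" "w < real k + 1" using w0
    by (simp_all add: k_def w_def[symmetric])
  show t0: "0 \<le> t" "t < 1" using kw by (simp_all add: t_def w_def[symmetric])
  have h: "hat xl dx m z = max 0 (1 - \<bar>w - real m\<bar>)" for m
    using hat_alt[OF dx] by (simp add: w_def)
  have zero: "hat xl dx m z * U m = 0" if "m \<notin> {k, Suc k}" for m
  proof -
    from that have "m < k \<or> m > Suc k" by auto
    hence "real m + 1 \<le> real k \<or> real m \<ge> real k + 2" by auto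
    hence "\<bar>w - real m\<bar> \<ge> 1" using kw by auto
    thus ?thesis by (simp add: h)
  qed
  have "interp xl dx U z = (\<Sum>m\<in>{k, Suc k}. hat xl dx m z * U m)"
    unfolding interp_def by (rule suminf_finite) (use zero in auto)
  also have "\<dots> = hat xl dx k z * U k + hat xl dx (Suc k) z * U (Suc k)" by simp
  also have "hat xl dx k z = 1 - t" using kw by (simp add: h t_def w_def[symmetric])
  also have "hat xl dx (Suc k) z = t" using kw by (simp add: h t_def w_def[symmetric])
  finally show "interp xl dx U z = (1 - t) * U k + t * U (Suc k)" .
qed

lemma interp_diff:
  assumes dx: "dx > 0" and z: "xl \<le> z" "z \<le> z'"
    and U: "\<And>k k'. k \<le> k' \<Longrightarrow> U k - U k' \<le> \<delta>"
  shows "interp xl dx U z - interp xl dx U z' \<le> \<delta>"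
proof -
  define k where "k = nat \<lfloor>(z - xl)/dx\<rfloor>"
  define t where "t = (z - xl)/dx - real k"
  define m where "m = nat \<lfloor>(z' - xl)/dx\<rfloor>"
  define s where "s = (z' - xl)/dx - real m"
  note A = interp_eq[OF dx z(1), folded k_def, folded t_def]
  have z': "xl \<le> z'" using z by simp
  note B = interp_eq[OF dx z', folded m_def, folded s_def]
  have d0: "\<delta> \<ge> 0" using U[of 0 0] by simp
  have "(z - xl)/dx \<le> (z' - xl)/dx" using dx z by (simp add: divide_right_mono)
  hence km: "k \<le> m" unfolding k_def m_def by (intro nat_mono floor_mono)
  show ?thesis
  proof (cases "k = m")
    case True
    have "t \<le> s" using True \<open>(z - xl)/dx \<le> (z' - xl)/dx\<close> by (simp add: t_def s_def)
    have "interp xl dx U z - interp xl dx U z' = (s - t) * (U k - U (Suc k))"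
      using A(1)[of U] B(1)[of U] True by (simp add: algebra_simps)
    also have "\<dots> \<le> (s - t) * \<delta>" using U[of k "Suc k"] \<open>t \<le> s\<close> by (intro mult_left_mono) auto
    also have "\<dots> \<le> \<delta>" using A B d0 \<open>t \<le> s\<close> by (intro mult_left_le_one_le) auto
    finally show ?thesis .
  next
    case False
    hence "Suc k \<le> m" using km by simp
    have P: "(1 - t) * U k + t * U (Suc k) \<le> max (U k) (U (Suc k))"
    proof -
      have "(1 - t) * U k \<le> (1 - t) * max (U k) (U (Suc k))" using A(3) by (intro mult_left_mono) auto
      moreover have "t * U (Suc k) \<le> t * max (U k) (U (Suc k))" using A(2) by (intro mult_left_mono) auto
      ultimately show ?thesis by (simp add: algebra_simps)
    qed
    have Q: "(1 - s) * U m + s * U (Suc m) \<ge> min (U m) (U (Suc m))"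
    proof -
      have "(1 - s) * U m \<ge> (1 - s) * min (U m) (U (Suc m))" using B(3) by (intro mult_left_mono) auto
      moreover have "s * U (Suc m) \<ge> s * min (U m) (U (Suc m))" using B(2) by (intro mult_left_mono) auto
      ultimately show ?thesis by (simp add: algebra_simps)
    qed
    have "max (U k) (U (Suc k)) - min (U m) (U (Suc m)) \<le> \<delta>"
      using U[of k m] U[of k "Suc m"] U[of "Suc k" m] U[of "Suc k" "Suc m"] \<open>Suc k \<le> m\<close>
      by (simp add: max_def min_def)
    thus ?thesis using P Q A(1)[of U] B(1)[of U] by linarith
  qed
qed

lemma ereal_minus_zero: "ereal a - x = 0 \<Longrightarrow> x = ereal a"
  by (cases x) auto

lemma step:
  fixes q qb :: "nat \<Rightarrow> real"
  assumes h: "h > 0" and dx: "dx > 0" and rh: "\<rho> * h < 1" and lj: "lj \<ge> 0" "lj * h < 1"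
    and r: "1 + r * h \<ge> 0" and ii: "i \<le> i'"
    and Fi: "schemeF \<rho> r \<gamma> xl lj yj h dx i (q i) (qb i) q = 0"
    and Fi': "schemeF \<rho> r \<gamma> xl lj yj h dx i' (q i') (qb i') q = 0"
    and dq: "\<And>k k'. k \<le> k' \<Longrightarrow> q k - q k' \<le> \<delta>"
    and dqb: "qb i - qb i' \<le> \<delta>"
  shows "q i - q i' \<le> (1 - \<rho> * h) * \<delta>"
proof -
  define K where "K = (1 - \<rho> * h) * (1 - lj * h) / h"
  define A where "A n = \<rho> * q n - (1 - \<rho> * h) * lj * (qb n - q n)" for n
  define z where "z n c = grid xl dx n + h * (r * grid xl dx n + yj - c)" for n c
  define f where "f n c = util \<gamma> c + ereal (K * (interp xl dx q (z n c) - q n))" for n c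
  have K0: "K \<ge> 0" using h rh lj unfolding K_def by simp
  have S: "(SUP c \<in> consSet r xl h dx yj n. f n c) = ereal (A n)"
    if "schemeF \<rho> r \<gamma> xl lj yj h dx n (q n) (qb n) q = 0" for n
    using ereal_minus_zero[OF that[unfolded schemeF_def]]
    by (simp add: A_def f_def z_def K_def)
  have gi: "grid xl dx i \<le> grid xl dx i'" using ii dx by (simp add: grid_def mult_right_mono)
  have zz: "z i c \<le> z i' c" for c
  proof -
    have "z i' c - z i c = (1 + r * h) * (grid xl dx i' - grid xl dx i)"
      by (simp add: z_def algebra_simps)
    also have "\<dots> \<ge> 0" using r gi by simp
    finally show ?thesis by simp
  qed
  have "(SUP c \<in> consSet r xl h dx yj i. f i c) \<le> ereal (A i' + K * (\<delta> + q i' - q i))"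
  proof (rule SUP_least)
    fix c assume c: "c \<in> consSet r xl h dx yj i"
    hence zi: "xl \<le> z i c" and c0: "c \<ge> 0" by (auto simp: consSet_def z_def)
    hence c': "c \<in> consSet r xl h dx yj i'" using zz[of c] by (auto simp: consSet_def z_def)
    have I: "interp xl dx q (z i c) - interp xl dx q (z i' c) \<le> \<delta>"
      by (rule interp_diff[OF dx zi zz dq])
    have "K * (interp xl dx q (z i c) - q i) \<le> K * (interp xl dx q (z i' c) - q i') + K * (\<delta> + q i' - q i)"
    proof -
      have "K * (interp xl dx q (z i c) - interp xl dx q (z i' c)) \<le> K * \<delta>"
        using I K0 by (intro mult_left_mono) auto
      thus ?thesis by (simp add: algebra_simps)
    qed
    hence "f i c \<le> util \<gamma> c + ereal (K * (interp xl dx q (z i' c) - q i') + K * (\<delta> + q i' - q i))"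
      unfolding f_def by (intro add_left_mono) simp
    also have "\<dots> = f i' c + ereal (K * (\<delta> + q i' - q i))"
      by (simp add: f_def add.assoc)
    also have "\<dots> \<le> ereal (A i') + ereal (K * (\<delta> + q i' - q i))"
      using S[OF Fi'] c' by (intro add_right_mono) (metis SUP_upper)
    finally show "f i c \<le> ereal (A i' + K * (\<delta> + q i' - q i))" by simp
  qed
  hence AA: "A i \<le> A i' + K * (\<delta> + q i' - q i)" using S[OF Fi] by simp
  define D where "D = q i - q i'"
  have "D * (\<rho> + (1 - \<rho> * h) * lj + K) \<le> (1 - \<rho> * h) * lj * (qb i - qb i') + K * \<delta>"
    using AA unfolding A_def D_def by (simp add: algebra_simps)
  also have "\<dots> \<le> (1 - \<rho> * h) * lj * \<delta> + K * \<delta>"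
    using dqb lj rh by (intro add_right_mono mult_left_mono) auto
  also have "\<rho> + (1 - \<rho> * h) * lj + K = 1 / h"
    using h unfolding K_def by (simp add: field_simps)
  finally have "D / h \<le> (1 - \<rho> * h) * lj * \<delta> + K * \<delta>" by simp
  hence "D \<le> h * ((1 - \<rho> * h) * lj * \<delta> + K * \<delta>)" using h by (simp add: field_simps)
  also have "\<dots> = (1 - \<rho> * h) * \<delta>" using h unfolding K_def by (simp add: field_simps)
  finally show ?thesis by (simp add: D_def)
qed

theorem mainTheorem15:
  fixes \<rho> r \<gamma> xl :: real and y lam :: "nat \<Rightarrow> real" and c1 c2 :: real
  assumes "\<rho> > 0" and "r < \<rho>" and "0 < y 1" and "y 1 < y 2" and "\<gamma> > 1"
    and "xl \<le> 0" and "\<rho> * xl + y 1 > 0" and "\<rho> * xl + y 2 > 0"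
    and "lam 1 \<ge> 0" and "lam 2 \<ge> 0"
    and "0 < c1" and "c1 \<le> c2"
  shows "\<exists>\<delta> > 0. \<forall>h dx (V :: nat \<Rightarrow> nat \<Rightarrow> real).
           0 < h \<and> h < \<delta> \<and> 0 < dx \<and> dx < \<delta> \<and> c1 \<le> h / dx \<and> h / dx \<le> c2
           \<and> \<rho> * h < 1 \<and> lam 1 * h < 1 \<and> lam 2 * h < 1
           \<and> (\<exists>B. \<forall>i. \<forall>j\<in>{1,2}. \<bar>V i j\<bar> \<le> B)
           \<and> (\<forall>i. \<forall>j\<in>{1,2}.
                schemeF \<rho> r \<gamma> xl (lam j) (y j) h dx i (V i j) (V i (3 - j)) (\<lambda>k. V k j) = 0)
           \<longrightarrow> (\<forall>j\<in>{1,2}. mono (\<lambda>i. V i j))"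
proof (intro exI[of _ "1 / (\<bar>r\<bar> + 1)"] conjI allI impI)
  show "0 < 1 / (\<bar>r\<bar> + 1)" by simp
  fix h dx and V :: "nat \<Rightarrow> nat \<Rightarrow> real"
  assume H: "0 < h \<and> h < 1 / (\<bar>r\<bar> + 1) \<and> 0 < dx \<and> dx < 1 / (\<bar>r\<bar> + 1) \<and> c1 \<le> h / dx \<and> h / dx \<le> c2
           \<and> \<rho> * h < 1 \<and> lam 1 * h < 1 \<and> lam 2 * h < 1
           \<and> (\<exists>B. \<forall>i. \<forall>j\<in>{1,2}. \<bar>V i j\<bar> \<le> B)
           \<and> (\<forall>i. \<forall>j\<in>{1,2}.
                schemeF \<rho> r \<gamma> xl (lam j) (y j) h dx i (V i j) (V i (3 - j)) (\<lambda>k. V k j) = 0)"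
  hence h: "0 < h" and dx: "0 < dx" and rh: "\<rho> * h < 1" and lh: "\<And>j. j \<in> {1,2} \<Longrightarrow> lam j * h < 1"
    and F: "\<And>i j. j \<in> {1,2} \<Longrightarrow> schemeF \<rho> r \<gamma> xl (lam j) (y j) h dx i (V i j) (V i (3 - j)) (\<lambda>k. V k j) = 0"
    by auto
  from H obtain B where B: "\<And>i j. j \<in> {1,2} \<Longrightarrow> \<bar>V i j\<bar> \<le> B" by auto
  have l0: "\<And>j. j \<in> {1,2} \<Longrightarrow> lam j \<ge> 0" using assms by auto
  have r1: "1 + r * h \<ge> 0"
  proof -
    have "h * (\<bar>r\<bar> + 1) < 1" using H by (simp add: field_simps)
    hence "\<bar>r\<bar> * h < 1" by (simp add: algebra_simps) (use h in linarith)
    moreover have "- \<bar>r\<bar> * h \<le> r * h" using h by (intro mult_right_mono) auto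
    ultimately show ?thesis by simp
  qed
  define P where "P = {V k j - V k' j | k k' j. k \<le> k' \<and> j \<in> {1,2::nat}}"
  have bdd: "bdd_above P"
    unfolding P_def bdd_above_def
  proof (rule exI[of _ "2 * B"], intro ballI)
    fix x assume "x \<in> {V k j - V k' j |k k' j. k \<le> k' \<and> j \<in> {1, 2::nat}}"
    then obtain k k' j where "x = V k j - V k' j" "j \<in> {1,2::nat}" by blast
    thus "x \<le> 2 * B" using B[of j k] B[of j k'] by linarith
  qed
  have inP: "V k j - V k' j \<in> P" if "k \<le> k'" "j \<in> {1,2}" for k k' j
    using that unfolding P_def by blast
  define d where "d = Sup P"
  have le_d: "V k j - V k' j \<le> d" if "k \<le> k'" "j \<in> {1,2}" for k k' j
    unfolding d_def using inP[OF that] bdd by (rule cSup_upper)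
  have d0: "0 \<le> d" using le_d[of 0 0 1] by simp
  have "d \<le> (1 - \<rho> * h) * d"
  proof (subst (1) d_def, rule cSup_least)
    show "P \<noteq> {}" using inP[of 0 0 1] by auto
    fix x assume "x \<in> P"
    then obtain k k' j where x: "x = V k j - V k' j" "k \<le> k'" "j \<in> {1,2::nat}"
      unfolding P_def by blast
    have j3: "3 - j \<in> {1,2}" using x(3) by auto
    show "x \<le> (1 - \<rho> * h) * d" unfolding x(1)
      by (rule step[where q="\<lambda>k. V k j" and qb="\<lambda>k. V k (3 - j)", OF h dx rh l0[OF x(3)] lh[OF x(3)]
            r1 x(2) F[OF x(3)] F[OF x(3)] le_d[OF _ x(3)] le_d[OF x(2) j3]])
  qed
  hence "\<rho> * h * d \<le> 0" by (simp add: algebra_simps)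
  hence "d \<le> 0" using assms(1) h by (simp add: mult_le_0_iff)
  show "\<forall>j\<in>{1,2}. mono (\<lambda>i. V i j)"
  proof (intro ballI monoI)
    fix j :: nat and k k' :: nat assume "j \<in> {1,2}" "k \<le> k'"
    thus "V k j \<le> V k' j" using le_d[of k k' j] \<open>d \<le> 0\<close> by simp
  qed
qed

end
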